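(* Let $H$ be a simple, strongly connected digraph with at least one arc, let $k$ be a positive integer, and let $T$ be a tournament that does not contain $k$ pairwise arc-disjoint immersion copies of $H$. Then there is a set $F$ of at most $6d_{\mathrm{ctw}}\|H\|^2k^2$ arcs of $T$ such that $T-F$ does not contain $H$ as an immersion.
   Context: $\|H\|:=|V(H)|+|A(H)|$. A tournament is a simple digraph with exactly one arc between every pair of distinct vertices. An immersion copy of $H$ in a digraph $G$ is a subgraph $\widehat H$ of $G$ with a map sending vertices of $H$ to distinct vertices of $\widehat H$ and each arc $(u,v)$ of $H$ to a directed path from the image of $u$ to the image of $v$, such that each arc of $\widehat H$ lies on exactly one of these paths; $G$ contains $H$ as an immersion if it has such a subgraph. For an ordering $\sigma$ (bijection $V(T)\to[|V(T)|]$) and $\alpha\in\{0,\dots,|V(T)|\}$, the $\alpha$-cut is the set of arcs $(u,v)$ with $\sigma(u)>\alpha\ge\sigma(v)$; the width of $\sigma$ is the maximum size of its cuts and the cutwidth $\mathrm{ctw}(T)$ is the minimum width of an ordering. $d_{\mathrm{ctw}}$ is a fixed constant, which is the square of an even integer, such that every tournament not containing a simple digraph $H'$ as an immersion has cutwidth at most $d_{\mathrm{ctw}}\|H'\|^2$ (such a constant exists by a result of Fomin and Pilipczuk). *)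

theory Defs
  imports Main
begin

type_synonym 'a digraph = "'a set \<times> ('a \<times> 'a) set"

definition verts :: "'a digraph \<Rightarrow> 'a set" where "verts G = fst G"
definition arcs :: "'a digraph \<Rightarrow> ('a \<times> 'a) set" where "arcs G = snd G"

text \<open>Simple digraph: finite, arcs between vertices, no loops (no parallel arcs by
  representation as a set of pairs).\<close>
definition simple_digraph :: "'a digraph \<Rightarrow> bool" where
  "simple_digraph G \<longleftrightarrow> finite (verts G) \<and> arcs G \<subseteq> verts G \<times> verts G
     \<and> (\<forall>v. (v, v) \<notin> arcs G)"

definition tournament :: "'a digraph \<Rightarrow> bool" where
  "tournament T \<longleftrightarrow> simple_digraph T \<and>
     (\<forall>u \<in> verts T. \<forall>v \<in> verts T. u \<noteq> v \<longrightarrow>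
        ((u, v) \<in> arcs T \<longleftrightarrow> (v, u) \<notin> arcs T))"

definition strongly_connected :: "'a digraph \<Rightarrow> bool" where
  "strongly_connected G \<longleftrightarrow> (\<forall>u \<in> verts G. \<forall>v \<in> verts G. (u, v) \<in> (arcs G)\<^sup>*)"

definition size_dg :: "'a digraph \<Rightarrow> nat" where
  "size_dg G = card (verts G) + card (arcs G)"

definition path_arcs :: "'a list \<Rightarrow> ('a \<times> 'a) set" where
  "path_arcs p = set (zip p (tl p))"

definition is_dpath :: "'a digraph \<Rightarrow> 'a list \<Rightarrow> 'a \<Rightarrow> 'a \<Rightarrow> bool" where
  "is_dpath G p x y \<longleftrightarrow> p \<noteq> [] \<and> distinct p \<and> hd p = x \<and> last p = y
     \<and> set p \<subseteq> verts G \<and> path_arcs p \<subseteq> arcs G"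

definition immersion_model ::
  "'a digraph \<Rightarrow> 'b digraph \<Rightarrow> ('b \<Rightarrow> 'a) \<Rightarrow> ('b \<times> 'b \<Rightarrow> 'a list) \<Rightarrow> bool" where
  "immersion_model G H phi P \<longleftrightarrow>
     inj_on phi (verts H) \<and> phi ` verts H \<subseteq> verts G \<and>
     (\<forall>e \<in> arcs H. is_dpath G (P e) (phi (fst e)) (phi (snd e))) \<and>
     (\<forall>e \<in> arcs H. \<forall>e' \<in> arcs H. e \<noteq> e' \<longrightarrow> path_arcs (P e) \<inter> path_arcs (P e') = {})"

definition model_arcs :: "'b digraph \<Rightarrow> ('b \<times> 'b \<Rightarrow> 'a list) \<Rightarrow> ('a \<times> 'a) set" where
  "model_arcs H P = (\<Union>e \<in> arcs H. path_arcs (P e))"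

definition contains_immersion :: "'a digraph \<Rightarrow> 'b digraph \<Rightarrow> bool" where
  "contains_immersion G H \<longleftrightarrow> (\<exists>phi P. immersion_model G H phi P)"

definition contains_k_disjoint_immersions :: "'a digraph \<Rightarrow> 'b digraph \<Rightarrow> nat \<Rightarrow> bool" where
  "contains_k_disjoint_immersions G H k \<longleftrightarrow>
     (\<exists>phi P. (\<forall>i < k. immersion_model G H (phi i) (P i)) \<and>
        (\<forall>i < k. \<forall>j < k. i \<noteq> j \<longrightarrow> model_arcs H (P i) \<inter> model_arcs H (P j) = {}))"

definition delete_arcs :: "'a digraph \<Rightarrow> ('a \<times> 'a) set \<Rightarrow> 'a digraph" where
  "delete_arcs G F = (verts G, arcs G - F)"

definition cut :: "'a digraph \<Rightarrow> ('a \<Rightarrow> nat) \<Rightarrow> nat \<Rightarrow> ('a \<times> 'a) set" where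
  "cut T \<sigma> \<alpha> = {(u, v) \<in> arcs T. \<sigma> u > \<alpha> \<and> \<alpha> \<ge> \<sigma> v}"

definition is_ordering :: "'a digraph \<Rightarrow> ('a \<Rightarrow> nat) \<Rightarrow> bool" where
  "is_ordering T \<sigma> \<longleftrightarrow> bij_betw \<sigma> (verts T) {1..card (verts T)}"

definition width :: "'a digraph \<Rightarrow> ('a \<Rightarrow> nat) \<Rightarrow> nat" where
  "width T \<sigma> = Max ((\<lambda>\<alpha>. card (cut T \<sigma> \<alpha>)) ` {0..card (verts T)})"

definition ctw :: "'a digraph \<Rightarrow> nat" where
  "ctw T = Min (width T ` {\<sigma>. is_ordering T \<sigma>})"

text \<open>The property of the constant d_ctw: square of an even integer, and every
  tournament not containing a simple digraph H' as an immersion has cutwidth at most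
  d * ||H'||^2. Finite digraphs are represented up to isomorphism with vertices in nat.\<close>
definition is_dctw :: "nat \<Rightarrow> bool" where
  "is_dctw d \<longleftrightarrow> (\<exists>m::nat. d = (2 * m)^2) \<and>
     (\<forall>(T :: nat digraph) (H' :: nat digraph). tournament T \<longrightarrow> simple_digraph H' \<longrightarrow>
        \<not> contains_immersion T H' \<longrightarrow> ctw T \<le> d * (size_dg H')^2)"

end

theory Submission
  imports Defs
begin

lemma va_simps[simp]: "verts (V, A) = V" "arcs (V, A) = A"
  by (simp_all add: verts_def arcs_def)

lemma path_arcs_simps[simp]:
  "path_arcs [] = {}" "path_arcs [a] = {}"
  "path_arcs (a # b # q) = insert (a, b) (path_arcs (b # q))"
  by (simp_all add: path_arcs_def)

lemma path_arcs_sub: "path_arcs p \<subseteq> set p \<times> set p"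
  by (induction p rule: induct_list012) auto

lemma path_reach:
  "x \<in> set p \<Longrightarrow> (hd p, x) \<in> (path_arcs p)\<^sup>* \<and> (x, last p) \<in> (path_arcs p)\<^sup>*"
proof (induction p arbitrary: x rule: induct_list012)
  case 1 then show ?case by simp
next
  case (2 a) then show ?case by simp
next
  case (3 a b q)
  have mono: "(path_arcs (b # q))\<^sup>* \<subseteq> (path_arcs (a # b # q))\<^sup>*"
    by (rule rtrancl_mono) auto
  have ab: "(a, b) \<in> (path_arcs (a # b # q))\<^sup>*" by auto
  have IHb: "(b, last (b # q)) \<in> (path_arcs (b # q))\<^sup>*" using "3.IH"(2)[of b] by simp
  show ?case
  proof (cases "x = a")
    case True
    then show ?thesis using ab IHb mono
      by (metis (no_types, lifting) last_ConsR list.distinct(1) list.sel(1) rtrancl.rtrancl_refl rtrancl_trans subsetD)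
  next
    case False
    then have x: "x \<in> set (b # q)" using "3.prems" by simp
    from "3.IH"(2)[OF x] have "(b, x) \<in> (path_arcs (b # q))\<^sup>*" "(x, last (b # q)) \<in> (path_arcs (b # q))\<^sup>*" by auto
    then show ?thesis using ab mono by (auto intro: rtrancl_trans)
  qed
qed


lemma modelD:
  assumes "immersion_model G H phi P"
  shows "inj_on phi (verts H)" "phi ` verts H \<subseteq> verts G"
    "e \<in> arcs H \<Longrightarrow> is_dpath G (P e) (phi (fst e)) (phi (snd e))"
    "e \<in> arcs H \<Longrightarrow> e' \<in> arcs H \<Longrightarrow> e \<noteq> e' \<Longrightarrow> path_arcs (P e) \<inter> path_arcs (P e') = {}"
  using assms unfolding immersion_model_def by simp_all

lemma dpath_reach:
  assumes "is_dpath G p x y"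
  shows "(x, y) \<in> (arcs G)\<^sup>*"
    and "z \<in> set p \<Longrightarrow> (x, z) \<in> (arcs G)\<^sup>* \<and> (z, y) \<in> (arcs G)\<^sup>*"
proof -
  have sub: "(path_arcs p)\<^sup>* \<subseteq> (arcs G)\<^sup>*" using assms by (intro rtrancl_mono) (auto simp: is_dpath_def)
  have ne: "p \<noteq> []" and hx: "hd p = x" and ly: "last p = y" using assms by (auto simp: is_dpath_def)
  have "y \<in> set p" using ne ly by auto
  from path_reach[OF this] show "(x, y) \<in> (arcs G)\<^sup>*" using sub hx by auto
  show "z \<in> set p \<Longrightarrow> (x, z) \<in> (arcs G)\<^sup>* \<and> (z, y) \<in> (arcs G)\<^sup>*"
    using path_reach[of z p] sub hx ly by auto
qed

definition mverts :: "'b digraph \<Rightarrow> ('b \<Rightarrow> 'a) \<Rightarrow> ('b \<times> 'b \<Rightarrow> 'a list) \<Rightarrow> 'a set" where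
  "mverts H phi P = phi ` verts H \<union> (\<Union>e \<in> arcs H. set (P e))"

lemma model_reach:
  assumes m: "immersion_model G H phi P" and sc: "strongly_connected H" and sH: "simple_digraph H"
    and x: "x \<in> mverts H phi P" and y: "y \<in> mverts H phi P"
  shows "(x, y) \<in> (arcs G)\<^sup>*"
proof -
  have pv: "(phi u, phi v) \<in> (arcs G)\<^sup>*" if "u \<in> verts H" "v \<in> verts H" for u v
  proof -
    have "(u, v) \<in> (arcs H)\<^sup>*" using sc that by (auto simp: strongly_connected_def)
    then show ?thesis
    proof (induction rule: rtrancl_induct)
      case base then show ?case by simp
    next
      case (step b c)
      have "is_dpath G (P (b, c)) (phi b) (phi c)" using m step(2) by (auto simp: immersion_model_def)
      then have "(phi b, phi c) \<in> (arcs G)\<^sup>*" by (rule dpath_reach(1))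
      then show ?case using step(3) by (rule rtrancl_trans[rotated])
    qed
  qed
  have ends: "\<exists>u \<in> verts H. \<exists>v \<in> verts H. (phi u, z) \<in> (arcs G)\<^sup>* \<and> (z, phi v) \<in> (arcs G)\<^sup>*"
    if zm: "z \<in> mverts H phi P" for z
  proof (cases "z \<in> phi ` verts H")
    case True then show ?thesis by auto
  next
    case False
    then obtain e where e: "e \<in> arcs H" "z \<in> set (P e)" using zm by (auto simp: mverts_def)
    have hv: "fst e \<in> verts H" "snd e \<in> verts H" using sH e(1)
      by (auto simp: simple_digraph_def)
    have "is_dpath G (P e) (phi (fst e)) (phi (snd e))" using m e(1) by (auto simp: immersion_model_def)
    from dpath_reach(2)[OF this e(2)] hv show ?thesis by blast
  qed
  obtain u1 v1 where "u1 \<in> verts H" "v1 \<in> verts H" "(x, phi v1) \<in> (arcs G)\<^sup>*" using ends[OF x] by blast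
  moreover obtain u2 v2 where "u2 \<in> verts H" "v2 \<in> verts H" "(phi u2, y) \<in> (arcs G)\<^sup>*" using ends[OF y] by blast
  ultimately show ?thesis using pv[of v1 u2] by (meson rtrancl_trans)
qed


lemma model_side:
  assumes m: "immersion_model (delete_arcs T F) H phi P" and sc: "strongly_connected H"
    and sH: "simple_digraph H" and cF: "cut T \<sigma> \<beta> \<subseteq> F"
  shows "(\<forall>x\<in>mverts H phi P. \<sigma> x \<le> \<beta>) \<or> (\<forall>x\<in>mverts H phi P. \<beta> < \<sigma> x)"
proof (rule ccontr)
  assume "\<not> ?thesis"
  then obtain x y where x: "x \<in> mverts H phi P" "\<beta> < \<sigma> x" and y: "y \<in> mverts H phi P" "\<sigma> y \<le> \<beta>"
    by (auto simp: not_le)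
  have "(x, y) \<in> (arcs (delete_arcs T F))\<^sup>*" by (rule model_reach[OF m sc sH x(1) y(1)])
  then have "\<beta> < \<sigma> y"
  proof (induction rule: rtrancl_induct)
    case base then show ?case using x by simp
  next
    case (step b c)
    show ?case
    proof (rule ccontr)
      assume "\<not> \<beta> < \<sigma> c"
      then have "(b, c) \<in> cut T \<sigma> \<beta>" using step by (auto simp: cut_def delete_arcs_def)
      then show False using step(2) cF by (auto simp: delete_arcs_def)
    qed
  qed
  then show False using y by simp
qed

definition subt :: "'a digraph \<Rightarrow> 'a set \<Rightarrow> 'a digraph" where
  "subt T S = (S, arcs T \<inter> (S \<times> S))"

lemma model_restrict:
  assumes m: "immersion_model (delete_arcs T F) H phi P"
    and W: "mverts H phi P \<subseteq> S" and F: "F' \<subseteq> F"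
  shows "immersion_model (delete_arcs (subt T S) F') H phi P"
  unfolding immersion_model_def
proof (intro conjI ballI impI)
  show "inj_on phi (verts H)" using m by (simp add: immersion_model_def)
  show "phi ` verts H \<subseteq> verts (delete_arcs (subt T S) F')"
    using W by (auto simp: mverts_def delete_arcs_def subt_def)
  fix e assume e: "e \<in> arcs H"
  have p: "is_dpath (delete_arcs T F) (P e) (phi (fst e)) (phi (snd e))"
    using m e by (simp add: immersion_model_def)
  have sP: "set (P e) \<subseteq> S" using W e by (auto simp: mverts_def)
  have "path_arcs (P e) \<subseteq> S \<times> S" using path_arcs_sub[of "P e"] sP by auto
  then show "is_dpath (delete_arcs (subt T S) F') (P e) (phi (fst e)) (phi (snd e))"
    using p sP F by (auto simp: is_dpath_def delete_arcs_def subt_def)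
next
  fix e e' assume "e \<in> arcs H" "e' \<in> arcs H" "e \<noteq> e'"
  then show "path_arcs (P e) \<inter> path_arcs (P e') = {}" using m by (simp add: immersion_model_def)
qed

lemma model_mono:
  assumes m: "immersion_model G H phi P" and VG: "verts G \<subseteq> verts G'" and AG: "arcs G \<subseteq> arcs G'"
  shows "immersion_model G' H phi P"
proof -
  have dp: "is_dpath G' p x y" if "is_dpath G p x y" for p x y
    using that VG AG unfolding is_dpath_def by (meson subset_trans)
  show ?thesis using m VG dp unfolding immersion_model_def by (meson subset_trans)
qed

lemma model_arcs_sub:
  assumes m: "immersion_model G H phi P"
  shows "model_arcs H P \<subseteq> arcs G"
  unfolding model_arcs_def
proof (rule UN_least)
  fix e assume "e \<in> arcs H"
  then have "is_dpath G (P e) (phi (fst e)) (phi (snd e))" using m by (simp add: immersion_model_def)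
  then show "path_arcs (P e) \<subseteq> arcs G" by (simp add: is_dpath_def)
qed

lemma combine:
  assumes "S1 \<inter> S2 = {}" and "S1 \<subseteq> verts T" and "S2 \<subseteq> verts T"
    and "contains_k_disjoint_immersions (subt T S1) H a"
    and "contains_k_disjoint_immersions (subt T S2) H b"
  shows "contains_k_disjoint_immersions T H (a + b)"
proof -
  obtain phi1 P1 where m1: "\<forall>i<a. immersion_model (subt T S1) H (phi1 i) (P1 i)"
    and d1: "\<forall>i<a. \<forall>j<a. i \<noteq> j \<longrightarrow> model_arcs H (P1 i) \<inter> model_arcs H (P1 j) = {}"
    using assms(4) by (auto simp: contains_k_disjoint_immersions_def)
  obtain phi2 P2 where m2: "\<forall>i<b. immersion_model (subt T S2) H (phi2 i) (P2 i)"
    and d2: "\<forall>i<b. \<forall>j<b. i \<noteq> j \<longrightarrow> model_arcs H (P2 i) \<inter> model_arcs H (P2 j) = {}"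
    using assms(5) by (auto simp: contains_k_disjoint_immersions_def)
  define phi where "phi i = (if i < a then phi1 i else phi2 (i - a))" for i
  define P where "P i = (if i < a then P1 i else P2 (i - a))" for i
  have s1: "model_arcs H (P1 i) \<subseteq> S1 \<times> S1" if "i < a" for i
    using model_arcs_sub[OF m1[rule_format, OF that]] by (auto simp: subt_def)
  have s2: "model_arcs H (P2 i) \<subseteq> S2 \<times> S2" if "i < b" for i
    using model_arcs_sub[OF m2[rule_format, OF that]] by (auto simp: subt_def)
  have "immersion_model T H (phi i) (P i)" if "i < a + b" for i
  proof (cases "i < a")
    case True
    have "immersion_model (subt T S1) H (phi1 i) (P1 i)" using m1 True by blast
    then have "immersion_model T H (phi1 i) (P1 i)"
      by (rule model_mono) (use assms(2) in \<open>auto simp: subt_def\<close>)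
    then show ?thesis using True unfolding phi_def P_def by simp
  next
    case False
    have "immersion_model (subt T S2) H (phi2 (i - a)) (P2 (i - a))" using m2 False that by auto
    then have "immersion_model T H (phi2 (i - a)) (P2 (i - a))"
      by (rule model_mono) (use assms(3) in \<open>auto simp: subt_def\<close>)
    then show ?thesis using False unfolding phi_def P_def by simp
  qed
  moreover have "model_arcs H (P i) \<inter> model_arcs H (P j) = {}" if "i < a + b" "j < a + b" "i \<noteq> j" for i j
  proof (cases "i < a"; cases "j < a")
    assume "i < a" "j < a" then show ?thesis using d1 that unfolding P_def by simp
  next
    assume h: "i < a" "\<not> j < a"
    then have "model_arcs H (P i) \<subseteq> S1 \<times> S1" "model_arcs H (P j) \<subseteq> S2 \<times> S2"
      using s1[of i] s2[of "j - a"] that unfolding P_def by auto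
    then show ?thesis using assms(1) by blast
  next
    assume h: "\<not> i < a" "j < a"
    then have "model_arcs H (P j) \<subseteq> S1 \<times> S1" "model_arcs H (P i) \<subseteq> S2 \<times> S2"
      using s1[of j] s2[of "i - a"] that unfolding P_def by auto
    then show ?thesis using assms(1) by blast
  next
    assume h: "\<not> i < a" "\<not> j < a"
    then have "i - a \<noteq> j - a" "i - a < b" "j - a < b" using that by auto
    then show ?thesis using d2 h unfolding P_def by simp
  qed
  ultimately show ?thesis unfolding contains_k_disjoint_immersions_def by blast
qed


definition dimg :: "('a \<Rightarrow> 'c) \<Rightarrow> 'a digraph \<Rightarrow> 'c digraph" where
  "dimg h G = (h ` verts G, map_prod h h ` arcs G)"

lemma path_arcs_map: "path_arcs (map h p) = map_prod h h ` path_arcs p"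
  by (induction p rule: induct_list012) auto

lemma model_dimg_G:
  assumes inj: "inj_on h (verts G)" and AG: "arcs G \<subseteq> verts G \<times> verts G"
    and m: "immersion_model G H phi P"
  shows "immersion_model (dimg h G) H (h \<circ> phi) (\<lambda>e. map h (P e))"
  unfolding immersion_model_def
proof (intro conjI ballI impI)
  have im: "phi ` verts H \<subseteq> verts G" and ip: "inj_on phi (verts H)" using m by (auto simp: immersion_model_def)
  show "inj_on (h \<circ> phi) (verts H)" using ip inj im by (meson comp_inj_on inj_on_subset)
  show "(h \<circ> phi) ` verts H \<subseteq> verts (dimg h G)" using im by (auto simp: dimg_def)
next
  fix e assume e: "e \<in> arcs H"
  have p: "is_dpath G (P e) (phi (fst e)) (phi (snd e))" using m e by (simp add: immersion_model_def)
  then have sp: "set (P e) \<subseteq> verts G" by (simp add: is_dpath_def)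
  then have "inj_on h (set (P e))" using inj by (rule inj_on_subset[rotated])
  then show "is_dpath (dimg h G) (map h (P e)) ((h \<circ> phi) (fst e)) ((h \<circ> phi) (snd e))"
    using p sp unfolding is_dpath_def path_arcs_map
    by (auto simp: dimg_def distinct_map hd_map last_map)
next
  fix e e' assume e: "e \<in> arcs H" "e' \<in> arcs H" "e \<noteq> e'"
  have d: "path_arcs (P e) \<inter> path_arcs (P e') = {}" using m e by (simp add: immersion_model_def)
  have s: "path_arcs (P e) \<subseteq> verts G \<times> verts G" "path_arcs (P e') \<subseteq> verts G \<times> verts G"
    using model_arcs_sub[OF m] e AG unfolding model_arcs_def by auto
  have ij: "inj_on (map_prod h h) (verts G \<times> verts G)" using inj by (rule map_prod_inj_on) (rule inj)
  show "path_arcs (map h (P e)) \<inter> path_arcs (map h (P e')) = {}"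
    unfolding path_arcs_map using inj_on_image_Int[OF ij s] d by simp
qed

lemma dimg_inv:
  assumes inj: "inj_on f (verts T)" and AT: "arcs T \<subseteq> verts T \<times> verts T"
  shows "dimg (inv_into (verts T) f) (dimg f T) = T"
proof -
  have v: "inv_into (verts T) f ` f ` verts T = verts T" using inj by simp
  have "map_prod (inv_into (verts T) f) (inv_into (verts T) f) ` map_prod f f ` arcs T = arcs T"
  proof -
    have "map_prod (inv_into (verts T) f) (inv_into (verts T) f) (map_prod f f x) = x" if "x \<in> arcs T" for x
      using that AT inj by (cases x) auto
    then show ?thesis by (simp add: image_comp cong: image_cong)
  qed
  then show ?thesis using v by (simp add: dimg_def verts_def arcs_def)
qed


lemma tournament_dimg:
  assumes inj: "inj_on f (verts T)" and t: "tournament T"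
  shows "tournament (dimg f T)"
proof -
  have AT: "arcs T \<subseteq> verts T \<times> verts T" and fin: "finite (verts T)" and nl: "\<forall>v. (v, v) \<notin> arcs T"
    and tt: "\<forall>u\<in>verts T. \<forall>v\<in>verts T. u \<noteq> v \<longrightarrow> ((u, v) \<in> arcs T) = ((v, u) \<notin> arcs T)"
    using t unfolding tournament_def simple_digraph_def by blast+
  have ij: "inj_on (map_prod f f) (verts T \<times> verts T)" using inj by (rule map_prod_inj_on) (rule inj)
  have mem: "(f u, f v) \<in> map_prod f f ` arcs T \<longleftrightarrow> (u, v) \<in> arcs T" if "u \<in> verts T" "v \<in> verts T" for u v
  proof -
    have "(f u, f v) = map_prod f f (u, v)" by simp
    moreover have "(u, v) \<in> verts T \<times> verts T" using that by simp
    ultimately show ?thesis using inj_on_image_mem_iff[OF ij _ AT] by metis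
  qed
  have ad: "arcs (dimg f T) = map_prod f f ` arcs T" and vd: "verts (dimg f T) = f ` verts T"
    by (simp_all add: dimg_def verts_def arcs_def)
  show ?thesis unfolding tournament_def simple_digraph_def
  proof (intro conjI ballI allI impI)
    show "finite (verts (dimg f T))" using fin vd by simp
    show "arcs (dimg f T) \<subseteq> verts (dimg f T) \<times> verts (dimg f T)" unfolding ad vd using AT
      by (auto simp: map_prod_def)
    fix v show "(v, v) \<notin> arcs (dimg f T)"
    proof
      assume "(v, v) \<in> arcs (dimg f T)"
      then obtain a b where ab: "(a, b) \<in> arcs T" "f a = v" "f b = v" unfolding ad by auto
      then have "a \<in> verts T" "b \<in> verts T" using AT by auto
      then have "a = b" using ab inj by (metis inj_onD)
      then show False using ab nl by auto
    qed
  next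
    fix x y assume x: "x \<in> verts (dimg f T)" and y: "y \<in> verts (dimg f T)" and xy: "x \<noteq> y"
    then obtain u v where uv: "u \<in> verts T" "v \<in> verts T" "x = f u" "y = f v" unfolding vd by auto
    then have "u \<noteq> v" using xy by auto
    then have "((u, v) \<in> arcs T) = ((v, u) \<notin> arcs T)" using tt uv(1,2) by blast
    then show "((x, y) \<in> arcs (dimg f T)) = ((y, x) \<notin> arcs (dimg f T))"
      unfolding ad uv(3,4) mem[OF uv(1,2)] mem[OF uv(2,1)] .
  qed
qed

lemma model_dimg_H:
  assumes m: "immersion_model G (dimg g X) psi Q" and inj: "inj_on g (verts X)"
    and AX: "arcs X \<subseteq> verts X \<times> verts X"
  shows "immersion_model G X (psi \<circ> g) (\<lambda>e. Q (map_prod g g e))"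
proof -
  have vd: "verts (dimg g X) = g ` verts X" by (simp add: dimg_def verts_def)
  have Mall: "inj_on psi (verts (dimg g X)) \<and> psi ` verts (dimg g X) \<subseteq> verts G
    \<and> (\<forall>e\<in>arcs (dimg g X). is_dpath G (Q e) (psi (fst e)) (psi (snd e)))
    \<and> (\<forall>e\<in>arcs (dimg g X). \<forall>e'\<in>arcs (dimg g X). e \<noteq> e' \<longrightarrow> path_arcs (Q e) \<inter> path_arcs (Q e') = {})"
    using m unfolding immersion_model_def .
  note M1 = conjunct1[OF Mall]
  note M2 = conjunct1[OF conjunct2[OF Mall]]
  note M3 = conjunct1[OF conjunct2[OF conjunct2[OF Mall]]]
  note M4 = conjunct2[OF conjunct2[OF conjunct2[OF Mall]]]
  have ip: "inj_on psi (g ` verts X)" using M1 vd by simp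
  have im: "psi ` g ` verts X \<subseteq> verts G" using M2 vd by simp
  have A: "map_prod g g e \<in> arcs (dimg g X)" if "e \<in> arcs X" for e
    using that by (simp add: dimg_def arcs_def)
  have ij: "inj_on (map_prod g g) (verts X \<times> verts X)" using inj by (rule map_prod_inj_on) (rule inj)
  show ?thesis unfolding immersion_model_def
  proof (intro conjI ballI impI)
    show "inj_on (psi \<circ> g) (verts X)" by (rule comp_inj_on[OF inj ip])
    show "(psi \<circ> g) ` verts X \<subseteq> verts G" unfolding image_comp[symmetric] by (rule im)
  next
    fix e assume e: "e \<in> arcs X"
    have "is_dpath G (Q (map_prod g g e)) (psi (fst (map_prod g g e))) (psi (snd (map_prod g g e)))"
      using M3 A[OF e] by (rule bspec)
    then show "is_dpath G (Q (map_prod g g e)) ((psi \<circ> g) (fst e)) ((psi \<circ> g) (snd e))"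
      by (simp add: fst_map_prod snd_map_prod)
  next
    fix e e' assume e: "e \<in> arcs X" "e' \<in> arcs X" "e \<noteq> e'"
    have ev: "e \<in> verts X \<times> verts X" "e' \<in> verts X \<times> verts X" using e(1,2) AX by auto
    have "map_prod g g e \<noteq> map_prod g g e'"
    proof
      assume "map_prod g g e = map_prod g g e'"
      then have "e = e'" by (rule inj_onD[OF ij _ ev])
      then show False using e(3) by contradiction
    qed
    then show "path_arcs (Q (map_prod g g e)) \<inter> path_arcs (Q (map_prod g g e')) = {}"
      by (rule M4[rule_format, OF A[OF e(1)] A[OF e(2)]])
  qed
qed

definition kcop :: "'b digraph \<Rightarrow> nat \<Rightarrow> (nat \<times> 'b) digraph" where
  "kcop H k = ({..<k} \<times> verts H, (\<lambda>(i, e). ((i, fst e), (i, snd e))) ` ({..<k} \<times> arcs H))"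

lemma kcop_simple:
  assumes "simple_digraph H" shows "simple_digraph (kcop H k)"
  using assms by (auto simp: simple_digraph_def kcop_def verts_def arcs_def)

lemma kcop_size:
  assumes "simple_digraph H" shows "size_dg (kcop H k) = k * size_dg H"
proof -
  have "inj_on (\<lambda>(i, e). ((i, fst e), (i, snd e))) ({..<k} \<times> arcs H)"
    by (auto simp: inj_on_def prod_eq_iff)
  then have "card (arcs (kcop H k)) = k * card (arcs H)"
    by (simp add: kcop_def arcs_def card_image card_cartesian_product)
  moreover have "card (verts (kcop H k)) = k * card (verts H)"
    by (simp add: kcop_def verts_def card_cartesian_product)
  ultimately show ?thesis by (simp add: size_dg_def algebra_simps)
qed

lemma kcop_model:
  assumes m: "immersion_model G (kcop H k) phi P" and sH: "simple_digraph H"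
  shows "contains_k_disjoint_immersions G H k"
proof -
  define phi' where "phi' i v = phi (i, v)" for i v
  define P' where "P' i e = P ((i, fst e), (i, snd e))" for i e
  have arc: "((i, fst e), (i, snd e)) \<in> arcs (kcop H k)" if "i < k" "e \<in> arcs H" for i e
    using that by (force simp: kcop_def arcs_def)
  have mi: "immersion_model G H (phi' i) (P' i)" if i: "i < k" for i
    unfolding immersion_model_def
  proof (intro conjI ballI impI)
    have "inj_on phi ({..<k} \<times> verts H)" using m by (simp add: immersion_model_def kcop_def verts_def)
    then show "inj_on (phi' i) (verts H)" using i unfolding phi'_def by (auto simp: inj_on_def)
    show "phi' i ` verts H \<subseteq> verts G" using m i unfolding phi'_def
      by (auto simp: immersion_model_def kcop_def verts_def)
  next
    fix e assume e: "e \<in> arcs H"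
    show "is_dpath G (P' i e) (phi' i (fst e)) (phi' i (snd e))"
      using modelD(3)[OF m arc[OF i e]] unfolding P'_def phi'_def by simp
  next
    fix e e' assume "e \<in> arcs H" "e' \<in> arcs H" "e \<noteq> e'"
    moreover have "((i, fst e), (i, snd e)) \<noteq> ((i, fst e'), (i, snd e'))" using \<open>e \<noteq> e'\<close> by (auto simp: prod_eq_iff)
    ultimately show "path_arcs (P' i e) \<inter> path_arcs (P' i e') = {}"
      using modelD(4)[OF m arc[OF i] arc[OF i]] unfolding P'_def by blast
  qed
  have "model_arcs H (P' i) \<inter> model_arcs H (P' j) = {}" if "i < k" "j < k" "i \<noteq> j" for i j
  proof -
    have "path_arcs (P' i e) \<inter> path_arcs (P' j e') = {}" if "e \<in> arcs H" "e' \<in> arcs H" for e e'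
    proof -
      have "((i, fst e), (i, snd e)) \<noteq> ((j, fst e'), (j, snd e'))" using \<open>i \<noteq> j\<close> by auto
      then show ?thesis using modelD(4)[OF m arc[OF \<open>i < k\<close> that(1)] arc[OF \<open>j < k\<close> that(2)]]
        unfolding P'_def by simp
    qed
    then show ?thesis unfolding model_arcs_def by blast
  qed
  then show ?thesis using mi unfolding contains_k_disjoint_immersions_def
    by (intro exI[of _ phi'] exI[of _ P']) simp
qed


lemma simple_dimg:
  assumes inj: "inj_on f (verts T)" and t: "simple_digraph T"
  shows "simple_digraph (dimg f T)"
proof -
  have AT: "arcs T \<subseteq> verts T \<times> verts T" and fin: "finite (verts T)" and nl: "\<forall>v. (v, v) \<notin> arcs T"
    using t unfolding simple_digraph_def by blast+
  have ad: "arcs (dimg f T) = map_prod f f ` arcs T" and vd: "verts (dimg f T) = f ` verts T"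
    by (simp_all add: dimg_def verts_def arcs_def)
  show ?thesis unfolding simple_digraph_def
  proof (intro conjI allI)
    show "finite (verts (dimg f T))" using fin vd by simp
    show "arcs (dimg f T) \<subseteq> verts (dimg f T) \<times> verts (dimg f T)" unfolding ad vd using AT
      by (auto simp: map_prod_def)
    fix v show "(v, v) \<notin> arcs (dimg f T)"
    proof
      assume "(v, v) \<in> arcs (dimg f T)"
      then obtain a b where ab: "(a, b) \<in> arcs T" "f a = v" "f b = v" unfolding ad by auto
      then have "a \<in> verts T" "b \<in> verts T" using AT by auto
      then have "a = b" using ab inj by (metis inj_onD)
      then show False using ab nl by auto
    qed
  qed
qed

lemma size_dimg:
  assumes inj: "inj_on f (verts T)" and AT: "arcs T \<subseteq> verts T \<times> verts T"
  shows "size_dg (dimg f T) = size_dg T"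
proof -
  have ij: "inj_on (map_prod f f) (verts T \<times> verts T)" using inj by (rule map_prod_inj_on) (rule inj)
  then have "inj_on (map_prod f f) (arcs T)" using AT by (rule inj_on_subset)
  then show ?thesis using inj by (simp add: size_dg_def dimg_def verts_def arcs_def card_image)
qed

lemma cut_dimg:
  assumes inj: "inj_on f (verts T)" and AT: "arcs T \<subseteq> verts T \<times> verts T"
  shows "cut (dimg f T) \<sigma>' \<beta> = map_prod f f ` cut T (\<sigma>' \<circ> f) \<beta>"
  by (auto simp: cut_def dimg_def arcs_def)

lemma width_dimg:
  assumes inj: "inj_on f (verts T)" and AT: "arcs T \<subseteq> verts T \<times> verts T"
  shows "width (dimg f T) \<sigma>' = width T (\<sigma>' \<circ> f)"
proof -
  have ij: "inj_on (map_prod f f) (verts T \<times> verts T)" using inj by (rule map_prod_inj_on) (rule inj)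
  have "card (cut (dimg f T) \<sigma>' \<beta>) = card (cut T (\<sigma>' \<circ> f) \<beta>)" for \<beta>
  proof -
    have "cut T (\<sigma>' \<circ> f) \<beta> \<subseteq> verts T \<times> verts T" using AT by (auto simp: cut_def)
    then have "inj_on (map_prod f f) (cut T (\<sigma>' \<circ> f) \<beta>)" using ij by (rule inj_on_subset[rotated])
    then show ?thesis unfolding cut_dimg[OF inj AT] by (rule card_image)
  qed
  moreover have "card (verts (dimg f T)) = card (verts T)" using inj by (simp add: dimg_def verts_def card_image)
  ultimately show ?thesis unfolding width_def by simp
qed

lemma ordering_dimg:
  assumes inj: "inj_on f (verts T)" and o: "is_ordering (dimg f T) \<sigma>'"
  shows "is_ordering T (\<sigma>' \<circ> f)"
proof -
  have c: "card (verts (dimg f T)) = card (verts T)" using inj by (simp add: dimg_def verts_def card_image)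
  have "bij_betw f (verts T) (verts (dimg f T))" using inj by (simp add: dimg_def verts_def inj_on_imp_bij_betw)
  moreover have "bij_betw \<sigma>' (verts (dimg f T)) {1..card (verts T)}" using o c by (simp add: is_ordering_def)
  ultimately show ?thesis unfolding is_ordering_def by (rule bij_betw_trans)
qed

lemma cut_le_width:
  assumes "\<beta> \<le> card (verts T)"
  shows "card (cut T \<sigma> \<beta>) \<le> width T \<sigma>"
  unfolding width_def using assms by (intro Max_ge) auto

lemma ctw_attained:
  assumes s: "simple_digraph G"
  shows "\<exists>\<sigma>. is_ordering G \<sigma> \<and> width G \<sigma> = ctw G"
proof -
  have fin: "finite (verts G)" and AG: "arcs G \<subseteq> verts G \<times> verts G" using s by (auto simp: simple_digraph_def)
  then have finA: "finite (arcs G)" by (meson finite_SigmaI finite_subset)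
  obtain h where h: "bij_betw h (verts G) {0..<card (verts G)}" using ex_bij_betw_finite_nat[OF fin] by blast
  have "bij_betw Suc {0..<card (verts G)} {1..card (verts G)}"
    by (simp add: bij_betw_def image_Suc_atLeastLessThan atLeastLessThanSuc_atLeastAtMost)
  with h have "bij_betw (Suc \<circ> h) (verts G) {1..card (verts G)}" by (rule bij_betw_trans)
  then have ne: "width G ` {\<sigma>. is_ordering G \<sigma>} \<noteq> {}" by (auto simp: is_ordering_def)
  have "width G \<sigma> \<le> card (arcs G)" for \<sigma>
    unfolding width_def
  proof (subst Max_le_iff)
    show "finite ((\<lambda>\<alpha>. card (cut G \<sigma> \<alpha>)) ` {0..card (verts G)})" by simp
    show "(\<lambda>\<alpha>. card (cut G \<sigma> \<alpha>)) ` {0..card (verts G)} \<noteq> {}" by simp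
    show "\<forall>a\<in>(\<lambda>\<alpha>. card (cut G \<sigma> \<alpha>)) ` {0..card (verts G)}. a \<le> card (arcs G)"
      using finA by (auto simp: cut_def intro!: card_mono)
  qed
  then have "width G ` {\<sigma>. is_ordering G \<sigma>} \<subseteq> {..card (arcs G)}" by auto
  then have "finite (width G ` {\<sigma>. is_ordering G \<sigma>})" by (rule finite_subset) simp
  from Min_in[OF this ne] show ?thesis unfolding ctw_def by auto
qed


lemma ordering_bound:
  fixes T :: "'a digraph" and H :: "'b digraph"
  assumes dc: "is_dctw d" and sH: "simple_digraph H" and t: "tournament T"
    and nk: "\<not> contains_k_disjoint_immersions T H k"
  shows "\<exists>\<sigma>. is_ordering T \<sigma> \<and> width T \<sigma> \<le> d * (k * size_dg H)^2"
proof -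
  have sT: "simple_digraph T" using t by (simp add: tournament_def)
  have fin: "finite (verts T)" and AT: "arcs T \<subseteq> verts T \<times> verts T" using sT by (auto simp: simple_digraph_def)
  obtain f :: "'a \<Rightarrow> nat" where f: "bij_betw f (verts T) {0..<card (verts T)}"
    using ex_bij_betw_finite_nat[OF fin] by blast
  then have inj: "inj_on f (verts T)" by (simp add: bij_betw_def)
  define T' where "T' = dimg f T"
  have t': "tournament T'" unfolding T'_def using inj t by (rule tournament_dimg)
  define K where "K = kcop H k"
  have sK: "simple_digraph K" unfolding K_def using sH by (rule kcop_simple)
  have finK: "finite (verts K)" and AK: "arcs K \<subseteq> verts K \<times> verts K" using sK by (auto simp: simple_digraph_def)
  obtain g :: "nat \<times> 'b \<Rightarrow> nat" where g: "bij_betw g (verts K) {0..<card (verts K)}"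
    using ex_bij_betw_finite_nat[OF finK] by blast
  then have injg: "inj_on g (verts K)" by (simp add: bij_betw_def)
  define H' where "H' = dimg g K"
  have sH': "simple_digraph H'" unfolding H'_def using injg sK by (rule simple_dimg)
  have szH': "size_dg H' = k * size_dg H"
    using size_dimg[OF injg AK] kcop_size[OF sH, of k] unfolding H'_def K_def by simp
  have nci: "\<not> contains_immersion T' H'"
  proof
    assume "contains_immersion T' H'"
    then obtain psi Q where m: "immersion_model T' H' psi Q" by (auto simp: contains_immersion_def)
    have m1: "immersion_model T' K (psi \<circ> g) (\<lambda>e. Q (map_prod g g e))"
      using m[unfolded H'_def] injg AK by (rule model_dimg_H)
    define h where "h = inv_into (verts T) f"
    have injh: "inj_on h (verts T')" unfolding h_def T'_def by (simp add: dimg_def verts_def inj_on_inv_into)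
    have AT': "arcs T' \<subseteq> verts T' \<times> verts T'" using t' by (simp add: tournament_def simple_digraph_def)
    have "immersion_model (dimg h T') K (h \<circ> (psi \<circ> g)) (\<lambda>e. map h (Q (map_prod g g e)))"
      using injh AT' m1 by (rule model_dimg_G)
    moreover have "dimg h T' = T" unfolding h_def T'_def using inj AT by (rule dimg_inv)
    ultimately have "immersion_model T K (h \<circ> (psi \<circ> g)) (\<lambda>e. map h (Q (map_prod g g e)))" by simp
    then have "contains_k_disjoint_immersions T H k" unfolding K_def using sH by (rule kcop_model)
    then show False using nk by contradiction
  qed
  have "ctw T' \<le> d * (size_dg H')^2"
    using dc t' sH' nci unfolding is_dctw_def by blast
  moreover obtain \<sigma>' where o: "is_ordering T' \<sigma>'" and w: "width T' \<sigma>' = ctw T'"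
    using ctw_attained[of T'] t' unfolding tournament_def by blast
  ultimately have "width T (\<sigma>' \<circ> f) \<le> d * (k * size_dg H)^2"
    using width_dimg[OF inj AT, of \<sigma>'] szH' unfolding T'_def by simp
  moreover have "is_ordering T (\<sigma>' \<circ> f)" using inj o unfolding T'_def by (rule ordering_dimg)
  ultimately show ?thesis by blast
qed


lemma subt_tournament:
  assumes t: "tournament T" and S: "S \<subseteq> verts T"
  shows "tournament (subt T S)"
proof -
  have fin: "finite (verts T)" and nl: "\<forall>v. (v, v) \<notin> arcs T"
    and tt: "\<forall>u\<in>verts T. \<forall>v\<in>verts T. u \<noteq> v \<longrightarrow> ((u, v) \<in> arcs T) = ((v, u) \<notin> arcs T)"
    using t unfolding tournament_def simple_digraph_def by blast+
  have vs: "verts (subt T S) = S" and as: "arcs (subt T S) = arcs T \<inter> (S \<times> S)"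
    by (simp_all add: subt_def verts_def arcs_def)
  show ?thesis unfolding tournament_def simple_digraph_def vs as
  proof (intro conjI ballI allI impI)
    show "finite S" using fin S by (rule finite_subset[rotated])
    show "arcs T \<inter> S \<times> S \<subseteq> S \<times> S" by blast
    fix v show "(v, v) \<notin> arcs T \<inter> S \<times> S" using nl by blast
  next
    fix u v assume uv: "u \<in> S" "v \<in> S" "u \<noteq> v"
    then have "((u, v) \<in> arcs T) = ((v, u) \<notin> arcs T)" using tt S by blast
    then show "((u, v) \<in> arcs T \<inter> S \<times> S) = ((v, u) \<notin> arcs T \<inter> S \<times> S)" using uv(1,2) by blast
  qed
qed

lemma subt_all:
  assumes "arcs T \<subseteq> verts T \<times> verts T"
  shows "subt T (verts T) = T"
  using assms by (cases T) (auto simp: subt_def verts_def arcs_def)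

lemma arcs_subt: "arcs (subt T S) \<subseteq> arcs T"
  by (simp add: subt_def arcs_def)

lemma mverts_sub:
  assumes m: "immersion_model G H phi P"
  shows "mverts H phi P \<subseteq> verts G"
proof -
  have "set (P e) \<subseteq> verts G" if "e \<in> arcs H" for e
    using modelD(3)[OF m that] by (simp add: is_dpath_def)
  then show ?thesis using modelD(2)[OF m] unfolding mverts_def by blast
qed

lemma no_model_empty:
  assumes "verts G = {}" and "arcs H \<noteq> {}" and "simple_digraph H"
  shows "\<not> immersion_model G H phi P"
proof
  assume m: "immersion_model G H phi P"
  obtain e where "e \<in> arcs H" using assms(2) by blast
  then have "fst e \<in> verts H" using assms(3) by (auto simp: simple_digraph_def)
  then show False using modelD(2)[OF m] assms(1) by blast
qed

lemma contains1:
  assumes "contains_immersion G H"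
  shows "contains_k_disjoint_immersions G H 1"
proof -
  obtain phi P where "immersion_model G H phi P" using assms by (auto simp: contains_immersion_def)
  then show ?thesis unfolding contains_k_disjoint_immersions_def
    by (intro exI[of _ "\<lambda>_. phi"] exI[of _ "\<lambda>_. P"]) simp
qed

lemma arith_split:
  fixes a b :: nat
  assumes "a = b \<or> a = b + 1" and "b \<ge> 1"
  shows "6 * a^2 + 6 * b^2 + 2 * (a + b)^2 \<le> 6 * (a + b)^2"
  using assms(1)
proof (elim disjE)
  assume "a = b" then show ?thesis by (simp add: power2_eq_square algebra_simps)
next
  assume a: "a = b + 1"
  have "b \<le> b * b" using assms(2) by simp
  then show ?thesis unfolding a using assms(2) by (simp add: power2_eq_square algebra_simps)
qed


lemma main:
  fixes H :: "'b digraph" and d :: nat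
  assumes dc: "is_dctw d" and sH: "simple_digraph H" and sc: "strongly_connected H"
    and aH: "arcs H \<noteq> {}"
  shows "1 \<le> k \<Longrightarrow> tournament (T :: 'a digraph) \<Longrightarrow> \<not> contains_k_disjoint_immersions T H k \<Longrightarrow>
    \<exists>F \<subseteq> arcs T. card F \<le> 6 * d * (size_dg H)^2 * k^2 \<and> \<not> contains_immersion (delete_arcs T F) H"
proof (induction k arbitrary: T rule: less_induct)
  case (less k T)
  define s where "s = size_dg H"
  have t: "tournament T" and nk: "\<not> contains_k_disjoint_immersions T H k" and k1: "1 \<le> k"
    using less.prems by auto
  have sT: "simple_digraph T" using t by (simp add: tournament_def)
  have fin: "finite (verts T)" and AT: "arcs T \<subseteq> verts T \<times> verts T" using sT by (auto simp: simple_digraph_def)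
  show ?case
  proof (cases "k = 1")
    case True
    have "delete_arcs T {} = T" by (cases T) (simp add: delete_arcs_def verts_def arcs_def)
    moreover have "\<not> contains_immersion T H" using nk contains1 True by blast
    ultimately show ?thesis by (intro exI[of _ "{}"]) simp
  next
    case False
    then have k2: "2 \<le> k" using k1 by simp
    define a where "a = (k + 1) div 2"
    define b where "b = k - a"
    have a1: "1 \<le> a" "a < k" and b1: "1 \<le> b" "b < k" and ab: "a + b = k" and abr: "a = b \<or> a = b + 1"
      using k2 unfolding a_def b_def by auto
    have bound: "6 * d * s^2 * a^2 + 6 * d * s^2 * b^2 + 2 * (d * (k * s)^2) \<le> 6 * d * s^2 * k^2"
    proof -
      have "d * s^2 * (6 * a^2 + 6 * b^2 + 2 * k^2) \<le> d * s^2 * (6 * k^2)"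
        using arith_split[OF abr b1(1)] unfolding ab by (rule mult_le_mono2)
      moreover have "6 * d * s^2 * a^2 + 6 * d * s^2 * b^2 + 2 * (d * (k * s)^2) = d * s^2 * (6 * a^2 + 6 * b^2 + 2 * k^2)"
        by (simp add: power_mult_distrib algebra_simps)
      moreover have "6 * d * s^2 * k^2 = d * s^2 * (6 * k^2)" by simp
      ultimately show ?thesis by simp
    qed
    show ?thesis
    proof (cases "contains_k_disjoint_immersions T H a")
      case False
      from less.IH[OF a1(2) a1(1) t False] obtain F where F: "F \<subseteq> arcs T"
        "card F \<le> 6 * d * (size_dg H)^2 * a^2" "\<not> contains_immersion (delete_arcs T F) H" by blast
      have "a^2 \<le> k^2" using a1 by (simp add: power_mono)
      then have "6 * d * (size_dg H)^2 * a^2 \<le> 6 * d * (size_dg H)^2 * k^2" by (rule mult_le_mono2)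
      then show ?thesis using F by (meson order_trans)
    next
      case True
      obtain \<sigma> where o: "is_ordering T \<sigma>" and w: "width T \<sigma> \<le> d * (k * s)^2"
        using ordering_bound[OF dc sH t nk] unfolding s_def by blast
      define V where "V = verts T"
      define n where "n = card V"
      have bij: "bij_betw \<sigma> V {1..n}" using o unfolding is_ordering_def V_def n_def .
      have rng: "1 \<le> \<sigma> v \<and> \<sigma> v \<le> n" if "v \<in> V" for v using bij that by (auto simp: bij_betw_def)
      have injs: "inj_on \<sigma> V" using bij by (simp add: bij_betw_def)
      define Ls where "Ls \<beta> = {v \<in> V. \<sigma> v \<le> \<beta>}" for \<beta>
      have "Ls n = V" unfolding Ls_def using rng by auto
      then have "subt T (Ls n) = T" using subt_all[OF AT] unfolding V_def by simp
      then have exn: "contains_k_disjoint_immersions (subt T (Ls n)) H a" using True by simp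
      define \<alpha> where "\<alpha> = (LEAST \<beta>. contains_k_disjoint_immersions (subt T (Ls \<beta>)) H a)"
      have ca: "contains_k_disjoint_immersions (subt T (Ls \<alpha>)) H a"
        unfolding \<alpha>_def using exn by (rule LeastI)
      have an: "\<alpha> \<le> n" unfolding \<alpha>_def using exn by (rule Least_le)
      have "Ls 0 = {}" unfolding Ls_def using rng by force
      then have "\<not> contains_k_disjoint_immersions (subt T (Ls 0)) H a"
        using no_model_empty[OF _ aH sH, of "subt T (Ls 0)"] a1(1) unfolding contains_k_disjoint_immersions_def
        by (metis One_nat_def Suc_le_lessD fst_conv subt_def verts_def)
      then have a0: "\<alpha> \<noteq> 0" using ca by (metis)
      have nL: "\<not> contains_k_disjoint_immersions (subt T (Ls (\<alpha> - 1))) H a"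
        unfolding \<alpha>_def by (rule not_less_Least) (use a0 \<alpha>_def in simp)
      define L where "L = Ls (\<alpha> - 1)"
      define R where "R = {v \<in> V. \<alpha> < \<sigma> v}"
      have nR: "\<not> contains_k_disjoint_immersions (subt T R) H b"
      proof
        assume "contains_k_disjoint_immersions (subt T R) H b"
        moreover have "Ls \<alpha> \<inter> R = {}" "Ls \<alpha> \<subseteq> verts T" "R \<subseteq> verts T"
          unfolding Ls_def R_def V_def by auto
        ultimately have "contains_k_disjoint_immersions T H (a + b)" using ca combine by blast
        then show False using nk ab by simp
      qed
      have LV: "L \<subseteq> verts T" and RV: "R \<subseteq> verts T" unfolding L_def Ls_def R_def V_def by auto
      from less.IH[OF a1(2) a1(1) subt_tournament[OF t LV] nL[folded L_def]]
      obtain FL where FL: "FL \<subseteq> arcs (subt T L)" "card FL \<le> 6 * d * (size_dg H)^2 * a^2"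
        "\<not> contains_immersion (delete_arcs (subt T L) FL) H" by blast
      from less.IH[OF b1(2) b1(1) subt_tournament[OF t RV] nR]
      obtain FR where FR: "FR \<subseteq> arcs (subt T R)" "card FR \<le> 6 * d * (size_dg H)^2 * b^2"
        "\<not> contains_immersion (delete_arcs (subt T R) FR) H" by blast
      define F where "F = FL \<union> FR \<union> cut T \<sigma> (\<alpha> - 1) \<union> cut T \<sigma> \<alpha>"
      have Fsub: "F \<subseteq> arcs T" unfolding F_def using FL(1) FR(1) arcs_subt[of T L] arcs_subt[of T R]
        by (auto simp: cut_def)
      have c1: "card (cut T \<sigma> (\<alpha> - 1)) \<le> d * (k * s)^2"
      proof -
        have "\<alpha> - 1 \<le> card (verts T)" using an unfolding n_def V_def by simp
        then show ?thesis using cut_le_width[of "\<alpha> - 1" T \<sigma>] w by (meson order_trans)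
      qed
      have c2: "card (cut T \<sigma> \<alpha>) \<le> d * (k * s)^2"
        using cut_le_width[of "\<alpha>" T \<sigma>] an w unfolding n_def V_def by simp
      have "card F \<le> card FL + card FR + card (cut T \<sigma> (\<alpha> - 1)) + card (cut T \<sigma> \<alpha>)"
        unfolding F_def by (meson add_le_mono card_Un_le order_trans le_refl)
      also have "\<dots> \<le> 6 * d * s^2 * a^2 + 6 * d * s^2 * b^2 + 2 * (d * (k * s)^2)"
        using FL(2) FR(2) c1 c2 unfolding s_def by linarith
      also have "\<dots> \<le> 6 * d * s^2 * k^2" by (rule bound)
      finally have cardF: "card F \<le> 6 * d * (size_dg H)^2 * k^2" unfolding s_def .
      have kill: "\<not> contains_immersion (delete_arcs T F) H"
      proof
        assume "contains_immersion (delete_arcs T F) H"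
        then obtain phi P where m: "immersion_model (delete_arcs T F) H phi P"
          by (auto simp: contains_immersion_def)
        define W where "W = mverts H phi P"
        have WV: "W \<subseteq> V" using mverts_sub[OF m] unfolding W_def V_def by (simp add: delete_arcs_def verts_def)
        have s1: "(\<forall>x\<in>W. \<sigma> x \<le> \<alpha> - 1) \<or> (\<forall>x\<in>W. \<alpha> - 1 < \<sigma> x)"
          unfolding W_def by (rule model_side[OF m sc sH]) (auto simp: F_def)
        have s2: "(\<forall>x\<in>W. \<sigma> x \<le> \<alpha>) \<or> (\<forall>x\<in>W. \<alpha> < \<sigma> x)"
          unfolding W_def by (rule model_side[OF m sc sH]) (auto simp: F_def)
        show False
        proof (cases "\<forall>x\<in>W. \<sigma> x \<le> \<alpha> - 1")
          case True
          then have "W \<subseteq> L" using WV unfolding L_def Ls_def by auto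
          then have "immersion_model (delete_arcs (subt T L) FL) H phi P"
            using model_restrict[OF m] unfolding W_def F_def by blast
          then show False using FL(3) by (auto simp: contains_immersion_def)
        next
          case notL: False
          show False
          proof (cases "\<forall>x\<in>W. \<alpha> < \<sigma> x")
            case True
            then have "W \<subseteq> R" using WV unfolding R_def by auto
            then have "immersion_model (delete_arcs (subt T R) FR) H phi P"
              using model_restrict[OF m] unfolding W_def F_def by blast
            then show False using FR(3) by (auto simp: contains_immersion_def)
          next
            case False
            then have "\<forall>x\<in>W. \<sigma> x = \<alpha>" using s1 s2 notL by fastforce
            moreover obtain e where e: "e \<in> arcs H" using aH by blast
            moreover have ev: "fst e \<in> verts H" "snd e \<in> verts H" "fst e \<noteq> snd e" using e sH
              by (auto simp: simple_digraph_def)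
            moreover have "phi (fst e) \<in> W" "phi (snd e) \<in> W" using ev unfolding W_def mverts_def by auto
            ultimately have "\<sigma> (phi (fst e)) = \<sigma> (phi (snd e))" by simp
            then have "phi (fst e) = phi (snd e)"
              using injs WV \<open>phi (fst e) \<in> W\<close> \<open>phi (snd e) \<in> W\<close> by (meson inj_onD subsetD)
            then have "fst e = snd e" using modelD(1)[OF m] ev by (meson inj_onD)
            then show False using ev by simp
          qed
        qed
      qed
      show ?thesis using Fsub cardF kill by blast
    qed
  qed
qed

theorem lemma16:
  fixes H :: "'b digraph" and T :: "'a digraph" and k d :: nat
  assumes "is_dctw d"
    and "simple_digraph H" and "strongly_connected H" and "arcs H \<noteq> {}"
    and "k \<ge> 1"
    and "tournament T"
    and "\<not> contains_k_disjoint_immersions T H k"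
  shows "\<exists>F \<subseteq> arcs T. card F \<le> 6 * d * (size_dg H)^2 * k^2
           \<and> \<not> contains_immersion (delete_arcs T F) H"
  using main[OF assms(1-4) assms(5-7)] .

end
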